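(* Let $q=3^m$ with $m\ge1$, let $\alpha\in\mathbb{F}_q$ be a non-square, and let $Z\in\mathbb{F}_{q^2}\setminus\mathbb{F}_q$ with $Z^2=\alpha$. Let $f(x)=x^{q+2}$ on $\mathbb{F}_{q^2}$ and for $b\in\mathbb{F}_{q^2}$ put $\beta(b)=\beta_f(1,\tfrac14 b)$. Then: (1) for every $c\in\mathbb{F}_q^*$, $\beta(c)=q+2$ if $c^2+1\in C_1$ and $\beta(c)=q$ otherwise; (2) for every $d\in\mathbb{F}_q^*$, $\beta(dZ)=1$; in particular $\nu_1>0$; (3) for all $c,d\in\mathbb{F}_q^*$, $\beta(c+dZ)\in\{0,1,2,5\}$.
   Context: $\beta_f(a,b)$ is the number of $(x,y)\in\mathbb{F}_{q^2}^2$ with $f(x)-f(y)=b$ and $f(x+a)-f(y+a)=b$. For the power function $f$, $\nu_i=\#\{b\in\mathbb{F}_{q^2}^*:\ \beta_f(1,b)=i\}$. $C_0$ (resp. $C_1$) denotes the set of nonzero squares (resp. non-squares) in $\mathbb{F}_q^*$. *)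

theory Defs
  imports Main
begin

definition Fq :: "nat \<Rightarrow> 'a::field set" where
  "Fq q = {x. x ^ q = x}"

definition C0 :: "nat \<Rightarrow> 'a::field set" where
  "C0 q = {x \<in> Fq q. x \<noteq> 0 \<and> (\<exists>y\<in>Fq q. y ^ 2 = x)}"

definition C1 :: "nat \<Rightarrow> 'a::field set" where
  "C1 q = {x \<in> Fq q. x \<noteq> 0} - C0 q"

definition beta_f :: "('a::{field,finite} \<Rightarrow> 'a) \<Rightarrow> 'a \<Rightarrow> 'a \<Rightarrow> nat" where
  "beta_f f a b = card {(x, y). f x - f y = b \<and> f (x + a) - f (y + a) = b}"

definition nu :: "('a::{field,finite} \<Rightarrow> 'a) \<Rightarrow> nat \<Rightarrow> nat" where
  "nu f i = card {b. b \<noteq> 0 \<and> beta_f f 1 b = i}"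

end

theory Submission
  imports Defs
begin


definition E1 :: "'b::field \<Rightarrow> 'b \<Rightarrow> 'b \<Rightarrow> 'b \<Rightarrow> 'b \<Rightarrow> 'b" where
  "E1 x y z u v = x + y + z + u + v"
definition E2 :: "'b::field \<Rightarrow> 'b \<Rightarrow> 'b \<Rightarrow> 'b \<Rightarrow> 'b \<Rightarrow> 'b" where
  "E2 x y z u v = x*y + x*z + x*u + x*v + y*z + y*u + y*v + z*u + z*v + u*v"
definition E3 :: "'b::field \<Rightarrow> 'b \<Rightarrow> 'b \<Rightarrow> 'b \<Rightarrow> 'b \<Rightarrow> 'b" where
  "E3 x y z u v = x*y*z + x*y*u + x*y*v + x*z*u + x*z*v + x*u*v + y*z*u + y*z*v + y*u*v + z*u*v"
definition E4 :: "'b::field \<Rightarrow> 'b \<Rightarrow> 'b \<Rightarrow> 'b \<Rightarrow> 'b \<Rightarrow> 'b" where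
  "E4 x y z u v = x*y*z*u + x*y*z*v + x*y*u*v + x*z*u*v + y*z*u*v"
definition E5 :: "'b::field \<Rightarrow> 'b \<Rightarrow> 'b \<Rightarrow> 'b \<Rightarrow> 'b \<Rightarrow> 'b" where
  "E5 x y z u v = x*y*z*u*v"

lemma prod5: "(n-x)*(n-y)*(n-z)*(n-u)*(n-v) =
   n^5 - E1 x y z u v * n^4 + E2 x y z u v * n^3 - E3 x y z u v * n^2 + E4 x y z u v * n - E5 x y z u (v::'b::field)"
  unfolding E1_def E2_def E3_def E4_def E5_def by algebra

lemma deriv5: "(x-y)*(x-z)*(x-u)*(x-v) =
   5*x^4 - 4*E1 x y z u v * x^3 + 3*E2 x y z u v * x^2 - 2*E3 x y z u v * x + E4 x y z u (v::'b::field)"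
  unfolding E1_def E2_def E3_def E4_def by algebra

lemma Eperm2: "E1 y x z u v = E1 x y z u v" "E2 y x z u v = E2 x y z u v" "E3 y x z u v = E3 x y z u v"
  "E4 y x z u v = E4 x y z u v" "E5 y x z u v = E5 x y z u (v::'b::field)"
  unfolding E1_def E2_def E3_def E4_def E5_def by algebra+
lemma Eperm3: "E1 z x y u v = E1 x y z u v" "E2 z x y u v = E2 x y z u v" "E3 z x y u v = E3 x y z u v"
  "E4 z x y u v = E4 x y z u v" "E5 z x y u v = E5 x y z u (v::'b::field)"
  unfolding E1_def E2_def E3_def E4_def E5_def by algebra+
lemma Eperm4: "E1 u x y z v = E1 x y z u v" "E2 u x y z v = E2 x y z u v" "E3 u x y z v = E3 x y z u v"
  "E4 u x y z v = E4 x y z u v" "E5 u x y z v = E5 x y z u (v::'b::field)"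
  unfolding E1_def E2_def E3_def E4_def E5_def by algebra+
lemma Eperm5: "E1 v x y z u = E1 x y z u v" "E2 v x y z u = E2 x y z u v" "E3 v x y z u = E3 x y z u v"
  "E4 v x y z u = E4 x y z u v" "E5 v x y z u = E5 x y z u (v::'b::field)"
  unfolding E1_def E2_def E3_def E4_def E5_def by algebra+

lemma deriv_val:
  fixes x y z u v A B :: "'b::field"
  assumes three: "(3::'b) = 0"
    and h: "E1 x y z u v = 1" "E2 x y z u v = 1" "E3 x y z u v = A - B" "E4 x y z u v = A" "E5 x y z u v = A"
  shows "(x-y)*(x-z)*(x-u)*(x-v)*(x+1) = - B * x"
proof -
  have D: "(x-y)*(x-z)*(x-u)*(x-v) = 5*x^4 - 4*x^3 + 3*x^2 - 2*(A-B)*x + A"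
    using deriv5[of x y z u v] h by simp
  have "(x-x)*(x-y)*(x-z)*(x-u)*(x-v) = x^5 - x^4 + x^3 - (A-B)*x^2 + A*x - A"
    using prod5[of x x y z u v] h by simp
  hence r: "x^5 - x^4 + x^3 - (A-B)*x^2 + A*x - A = 0" by simp
  have "(5*x^4 - 4*x^3 + 3*x^2 - 2*(A-B)*x + A) * (x+1) =
        - B * x - (x^5 - x^4 + x^3 - (A-B)*x^2 + A*x - A) + 3 * (2*x^5 + (1 - A + B)*x^2 + B*x)"
    by algebra
  thus ?thesis using D r three by simp
qed

lemma vand:
  fixes r1 r2 r3 a b c :: "'b::field"
  assumes d: "r1 \<noteq> r2" "r1 \<noteq> r3" "r2 \<noteq> r3"
    and h: "a*r1^2 + b*r1 + c = 0" "a*r2^2 + b*r2 + c = 0" "a*r3^2 + b*r3 + c = 0"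
  shows "a = 0 \<and> b = 0 \<and> c = 0"
proof -
  have "(r1 - r2) * (a*(r1+r2) + b) = 0" using h by algebra
  hence 1: "a*(r1+r2) + b = 0" using d by simp
  have "(r1 - r3) * (a*(r1+r3) + b) = 0" using h by algebra
  hence 2: "a*(r1+r3) + b = 0" using d by simp
  have "a * (r2 - r3) = 0" using 1 2 by algebra
  hence a: "a = 0" using d by simp
  hence b: "b = 0" using 1 by simp
  thus ?thesis using a h by simp
qed

lemma delta_prod:
  fixes a b c d e f g h i j p1 p2 p3 p4 p5 :: "'b::field"
  shows "(a*b*c*d*p1) * ((-a)*e*f*g*p2) * ((-b)*(-e)*h*i*p3) * ((-c)*(-f)*(-h)*j*p4) * ((-d)*(-g)*(-i)*(-j)*p5)
     = (a*b*c*d*e*f*g*h*i*j)^2 * (p1*p2*p3*p4*p5)"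
  by algebra

definition Qe :: "'b::field \<Rightarrow> 'b \<Rightarrow> 'b \<Rightarrow> 'b" where
  "Qe A B n = n^5 - n^4 + n^3 + (B - A)*n^2 + A*n - A"

lemma factor3:
  fixes r1 r2 r3 u v A B n :: "'b::field"
  assumes hu: "u = r1 + r2 + r3 - 1"
    and hv: "v = 1 + (r1 + r2 + r3) * u - (r1*r2 + r1*r3 + r2*r3)"
  shows "Qe A B n - (n-r1)*(n-r2)*(n-r3)*(n^2 + u*n + v) =
    (B - A + (r1+r2+r3)*v - (r1*r2 + r1*r3 + r2*r3)*u + r1*r2*r3) * n^2
    + (A - (r1*r2 + r1*r3 + r2*r3)*v + r1*r2*r3*u) * n + (r1*r2*r3*v - A)"
  unfolding Qe_def using hu hv by algebra

lemma Esplit: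
  fixes x y z u v :: "'b::field"
  shows "E1 x y z u v = (x+y+z) + (u+v)"
    "E2 x y z u v = (x*y + x*z + y*z) + (x+y+z)*(u+v) + u*v"
    "E3 x y z u v = x*y*z + (x*y + x*z + y*z)*(u+v) + (x+y+z)*(u*v)"
    "E4 x y z u v = x*y*z*(u+v) + (x*y + x*z + y*z)*(u*v)"
    "E5 x y z u v = x*y*z*(u*v)"
  unfolding E1_def E2_def E3_def E4_def E5_def by algebra+

lemma delta_split:
  fixes a b c d e f g h i j :: "'b::field"
  shows "a*b*c*d*e*f*g*h*i*j = j * (a*b*e*(c*d)*(f*g)*(h*i))"
  by algebra


lemma c3b: "(3::'b::field) = 0 \<Longrightarrow> (a::'b) = b + 3*c \<Longrightarrow> a = b" by simp

lemma lin_solve: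
  fixes n X Y w wq :: "'b::field"
  assumes three: "(3::'b) = 0" and e1: "(n-1)*X + Y = w" and e2: "X + (n-1)*Y = wq"
  shows "n*(n+1)*X = (n-1)*w - wq"
proof -
  have "n*(n+1)*X = (n-1)*((n-1)*X + Y) - (X + (n-1)*Y) + 3*(n*X)" by algebra
  thus ?thesis using e1 e2 three by simp
qed

lemma MM:
  fixes n w wq :: "'b::field"
  assumes three: "(3::'b) = 0"
  shows "((n-1)*w - wq)*((n-1)*wq - w) = (n+1)^2*(w+wq)^2 - n^2*(w-wq)^2"
  by (rule c3b[OF three, where c="- (n*(w^2 + wq^2) + w*wq*(n^2 + 2*n))"]) algebra

lemma QQ:
  fixes n A B :: "'b::field"
  assumes three: "(3::'b) = 0"
  shows "n^3*(n+1)^2 - A*(n+1)^2 + B*n^2 = Qe A B n"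
  unfolding Qe_def by (rule c3b[OF three, where c="n^4 - A*n"]) algebra

lemma back_id:
  fixes n w wq :: "'b::field"
  assumes three: "(3::'b) = 0"
  shows "(n-1)*((n-1)*w - wq) + ((n-1)*wq - w) = n*(n+1)*w"
  by (rule c3b[OF three, where c="- (n*w)"]) algebra


lemma c3: "(3::'a::comm_ring_1) = 0 \<Longrightarrow> (a::'a) = b + 3*c \<Longrightarrow> a = b" by simp

locale F3 =
  fixes m q :: nat and Z :: "'a::{field,finite}"
  assumes m1: "m \<ge> 1" and qdef: "q = 3^m" and cardU: "card (UNIV::'a set) = q^2"
    and Znot: "Z \<notin> Fq q" and ZZ: "Z^2 \<in> Fq q"
begin

lemma q_odd: "odd q" using qdef by simp
lemma q_pos: "q > 0" using qdef by simp

lemma three: "(3::'a) = 0"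
proof -
  have b: "bij_betw (\<lambda>y::'a. y + 1) UNIV UNIV"
    by (rule bij_betw_byWitness[where f'="\<lambda>y. y - 1"]) auto
  have "(\<Sum>y\<in>UNIV. y + 1) = (\<Sum>y\<in>UNIV. (y::'a))"
    using sum.reindex_bij_betw[OF b, of "\<lambda>y. y"] by simp
  moreover have "(\<Sum>y\<in>UNIV. y + 1) = (\<Sum>y\<in>UNIV. y) + (of_nat (card (UNIV::'a set))::'a)"
    by (simp add: sum.distrib)
  ultimately have "(of_nat (card (UNIV::'a set))::'a) = 0" by simp
  hence "(3::'a)^(m*2) = 0" using cardU qdef by (simp add: power_mult)
  thus ?thesis by simp
qed

lemma frob3: "(x + y)^3 = x^3 + (y::'a)^3"
  by (rule c3[OF three, where c="x^2*y+x*y^2"]) algebra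

lemma frob_pow: "(x + y)^(3^k) = x^(3^k) + (y::'a)^(3^k)"
proof (induction k)
  case 0 then show ?case by simp
next
  case (Suc k)
  have "(x + y)^(3^Suc k) = ((x+y)^(3^k))^3" by (simp add: power_mult[symmetric] mult.commute)
  also have "\<dots> = (x^(3^k))^3 + (y^(3^k))^3" using Suc frob3 by simp
  also have "\<dots> = x^(3^Suc k) + y^(3^Suc k)" by (simp add: power_mult[symmetric] mult.commute)
  finally show ?case .
qed

lemma frob_add: "(x + y)^q = x^q + (y::'a)^q" using frob_pow qdef by simp
lemma frob_neg: "(- x)^q = - ((x::'a)^q)" using q_odd by simp
lemma frob_diff: "(x - y)^q = x^q - (y::'a)^q"
  using frob_add[of x "-y"] frob_neg[of y] by simp

lemma fermat: "(x::'a)^(q^2) = x"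
proof (cases "x = 0")
  case True then show ?thesis using q_pos by simp
next
  case False
  let ?U = "UNIV - {0::'a}"
  have b: "bij_betw (\<lambda>y. x * y) ?U ?U"
    by (rule bij_betw_byWitness[where f'="\<lambda>y. y / x"]) (use False in auto)
  have "(\<Prod>y\<in>?U. x * y) = (\<Prod>y\<in>?U. y)"
    using prod.reindex_bij_betw[OF b, of "\<lambda>y. y"] by simp
  moreover have "(\<Prod>y\<in>?U. x * y) = x ^ card ?U * (\<Prod>y\<in>?U. y)"
    by (simp add: prod.distrib)
  moreover have "(\<Prod>y\<in>?U. y) \<noteq> 0" by simp
  ultimately have "x ^ card ?U = 1" by simp
  moreover have "card ?U = q^2 - 1" using cardU by (simp add: card_Diff_singleton)
  ultimately have "x^(q^2 - 1) = 1" by simp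
  hence "x^(q^2 - 1) * x = x" by simp
  moreover have "q^2 - 1 + 1 = q^2" using q_pos by simp
  ultimately show ?thesis by (metis power_Suc2 Suc_eq_plus1)
qed

lemma sg_sg: "((x::'a)^q)^q = x"
  using fermat by (simp add: power_mult[symmetric] power2_eq_square)

lemma Fq_iff: "x \<in> Fq q \<longleftrightarrow> x^q = (x::'a)" by (simp add: Fq_def)
lemma Fq_0[simp]: "(0::'a) \<in> Fq q" using q_pos by (simp add: Fq_iff)
lemma Fq_1[simp]: "(1::'a) \<in> Fq q" by (simp add: Fq_iff)
lemma Fq_add: "x \<in> Fq q \<Longrightarrow> y \<in> Fq q \<Longrightarrow> x + (y::'a) \<in> Fq q" by (simp add: Fq_iff frob_add)
lemma Fq_diff: "x \<in> Fq q \<Longrightarrow> y \<in> Fq q \<Longrightarrow> x - (y::'a) \<in> Fq q" by (simp add: Fq_iff frob_diff)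
lemma Fq_minus: "x \<in> Fq q \<Longrightarrow> - (x::'a) \<in> Fq q" by (simp add: Fq_iff frob_neg)
lemma Fq_mult: "x \<in> Fq q \<Longrightarrow> y \<in> Fq q \<Longrightarrow> x * (y::'a) \<in> Fq q" by (simp add: Fq_iff power_mult_distrib)
lemma Fq_divide: "x \<in> Fq q \<Longrightarrow> y \<in> Fq q \<Longrightarrow> x / (y::'a) \<in> Fq q" by (simp add: Fq_iff power_divide)
lemma Fq_pow: "x \<in> Fq q \<Longrightarrow> (x::'a)^k \<in> Fq q" by (metis Fq_iff power_mult mult.commute)
lemma Fq_sg: "(x::'a)^q \<in> Fq q \<longleftrightarrow> x \<in> Fq q" by (auto simp add: Fq_iff sg_sg)
lemma Fq_trace: "(x::'a) + x^q \<in> Fq q" by (simp add: Fq_iff frob_add sg_sg add.commute)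
lemma Fq_norm: "(x::'a) * x^q \<in> Fq q" by (simp add: Fq_iff power_mult_distrib sg_sg mult.commute)

lemma two: "(2::'a) = -1" using three by (simp add: eq_neg_iff_add_eq_0)
lemma four: "(4::'a) = 1"
proof - have "(4::'a) = 3 + 1" by simp thus ?thesis using three by simp qed
lemma two_ne: "(2::'a) \<noteq> 0"
proof
  assume "(2::'a) = 0"
  moreover have "(3::'a) = 2 + 1" by simp
  ultimately show False using three by simp
qed
lemma one_ne_neg: "(1::'a) \<noteq> -1" using two two_ne by (metis one_add_one add_eq_0_iff2)

lemma two_q: "(2::'a)^q = 2" using Fq_add[OF Fq_1 Fq_1] by (simp add: Fq_iff one_add_one)

lemma Zq: "Z^q = -Z"
proof -
  have "(Z^q)^2 = (Z^2)^q" by (simp add: power_mult[symmetric] mult.commute)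
  also have "\<dots> = Z^2" using ZZ by (simp add: Fq_iff)
  finally have "(Z^q - Z) * (Z^q + Z) = 0" by (simp add: algebra_simps power2_eq_square)
  moreover have "Z^q \<noteq> Z" using Znot by (simp add: Fq_iff)
  ultimately show ?thesis by (simp add: eq_neg_iff_add_eq_0)
qed
lemma Z_ne: "Z \<noteq> 0" using Znot by auto

lemma card_Fq: "card (Fq q :: 'a set) = q"
proof -
  have b: "bij_betw (\<lambda>(s,t). s + t * Z) (Fq q \<times> Fq q) (UNIV::'a set)"
  proof (rule bij_betw_imageI)
    show "inj_on (\<lambda>(s,t). s + t * Z) (Fq q \<times> Fq q)"
    proof (rule inj_onI, clarify)
      fix s t s' t' :: 'a
      assume h: "s \<in> Fq q" "t \<in> Fq q" "s' \<in> Fq q" "t' \<in> Fq q" "s + t * Z = s' + t' * Z"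
      show "s = s' \<and> t = t'"
      proof (cases "t = t'")
        case True then show ?thesis using h by simp
      next
        case False
        have "Z = (s - s') / (t' - t)" using h(5) False
          by (simp add: field_simps)
        hence "Z \<in> Fq q" using h by (simp add: Fq_divide Fq_diff)
        with Znot show ?thesis by simp
      qed
    qed
    show "(\<lambda>(s,t). s + t * Z) ` (Fq q \<times> Fq q) = UNIV"
    proof (rule set_eqI, rule iffI)
      fix X :: 'a
      define t where "t = (X - X^q) / (2 * Z)"
      define s where "s = X - t * Z"
      have tq: "t \<in> Fq q" unfolding t_def Fq_iff
        using two_ne Z_ne by (simp add: power_divide frob_diff sg_sg power_mult_distrib Zq Fq_iff[symmetric] field_simps two_q)
      have e: "t * (2 * Z) = X - X^q" using two_ne Z_ne by (simp add: t_def)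
      have "s^q = X^q + t*Z" using tq by (simp add: s_def frob_diff power_mult_distrib Zq Fq_iff)
      also have "\<dots> = X - t*Z" using e by (simp add: algebra_simps mult_2)
      finally have sq: "s \<in> Fq q" by (simp add: Fq_iff s_def)
      have "X = s + t * Z" by (simp add: s_def)
      thus "X \<in> (\<lambda>(s,t). s + t * Z) ` (Fq q \<times> Fq q)" using sq tq by auto
    qed simp
  qed
  have "card (Fq q \<times> Fq q :: ('a \<times> 'a) set) = q^2" using bij_betw_same_card[OF b] cardU by simp
  hence "card (Fq q :: 'a set)^2 = q^2" by (simp add: card_cartesian_product power2_eq_square)
  thus ?thesis by (simp add: power2_eq_iff_nonneg)
qed

lemma sq_eq_iff: "(x::'a)^2 = y^2 \<longleftrightarrow> x = y \<or> x = - y"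
proof -
  have "(x::'a)^2 = y^2 \<longleftrightarrow> (x - y) * (x + y) = 0" by (simp add: algebra_simps power2_eq_square)
  thus ?thesis by (auto simp: eq_neg_iff_add_eq_0)
qed

lemma neg_ne: "(x::'a) \<noteq> 0 \<Longrightarrow> x \<noteq> - x"
  using two_ne by (metis add_eq_0_iff2 mult_2 mult_eq_0_iff)

lemma sq_exists: "e \<in> Fq q \<Longrightarrow> \<exists>\<rho>::'a. \<rho>^2 = e"
proof -
  assume eF: "e \<in> Fq q"
  define F where "F = Fq q - {0::'a}"
  define S where "S = (\<lambda>s. s^2) ` F"
  have SF: "S \<subseteq> F" by (auto simp: S_def F_def Fq_pow)
  have cF: "card F = q - 1" using card_Fq by (simp add: F_def card_Diff_singleton)
  have "card F = (\<Sum>y\<in>S. card {s. s \<in> F \<and> s^2 = y})"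
    unfolding S_def using sum.image_gen[of F "\<lambda>_. (1::nat)" "\<lambda>s. s^2"] by simp
  also have "\<dots> = (\<Sum>y\<in>S. 2)"
  proof (rule sum.cong[OF refl])
    fix y assume "y \<in> S"
    then obtain s0 where s0: "s0 \<in> F" "y = s0^2" by (auto simp: S_def)
    have "{s. s \<in> F \<and> s^2 = y} = {s0, - s0}"
      using s0 by (auto simp: sq_eq_iff F_def Fq_minus)
    moreover have "s0 \<noteq> - s0" using s0 neg_ne by (auto simp: F_def)
    ultimately show "card {s. s \<in> F \<and> s^2 = y} = 2" by simp
  qed
  finally have cFS: "card F = 2 * card S" by simp
  define N where "N = F - S"
  have cN: "card N = card S" using cFS SF by (simp add: N_def card_Diff_subset finite_subset)
  have img: "(\<lambda>y. Z^2 * y) ` S = N"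
  proof (rule card_subset_eq)
    show "finite N" by simp
    show "(\<lambda>y. Z^2 * y) ` S \<subseteq> N"
    proof
      fix x assume "x \<in> (\<lambda>y. Z^2 * y) ` S"
      then obtain s where s: "s \<in> F" "x = Z^2 * s^2" by (auto simp: S_def)
      have xF: "x \<in> F" using s ZZ Z_ne by (auto simp: F_def Fq_mult Fq_pow)
      have "x \<notin> S"
      proof
        assume "x \<in> S"
        then obtain t where t: "t \<in> F" "x = t^2" by (auto simp: S_def)
        have "Z^2 = (t / s)^2" using s t by (auto simp: F_def power_divide)
        hence "Z = t/s \<or> Z = - (t/s)" by (simp add: sq_eq_iff)
        moreover have "t / s \<in> Fq q" using s t by (auto simp: F_def Fq_divide)
        ultimately show False using Znot Fq_minus by auto
      qed
      thus "x \<in> N" using xF by (simp add: N_def)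
    qed
    have "inj_on (\<lambda>y. Z^2 * y) S" using Z_ne by (auto intro: inj_onI)
    thus "card ((\<lambda>y. Z^2 * y) ` S) = card N" using cN by (simp add: card_image)
  qed
  show ?thesis
  proof (cases "e = 0")
    case True thus ?thesis by (intro exI[of _ 0]) simp
  next
    case False
    hence eF': "e \<in> F" using eF by (simp add: F_def)
    show ?thesis
    proof (cases "e \<in> S")
      case True thus ?thesis by (auto simp: S_def)
    next
      case False
      hence "e \<in> N" using eF' by (simp add: N_def)
      then obtain s where "e = Z^2 * s^2" using img by (auto simp: S_def)
      thus ?thesis by (intro exI[of _ "Z * s"]) (simp add: power_mult_distrib)
    qed
  qed
qed


end
context F3 begin
definition P :: "'a \<Rightarrow> 'a" where "P X = X^2 * X^q + X^q - X"

lemma P_Fq: "X \<in> Fq q \<Longrightarrow> P X = X^3" by (simp add: P_def Fq_iff power2_eq_square power3_eq_cube)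
lemma P_neg: "P (- X) = - P X" by (simp add: P_def frob_neg)
lemma sg_pow: "((x::'a)^k)^q = (x^q)^k" by (metis power_mult mult.commute)

lemma P_sg: "(P X)^q = (X^q)^2 * X + X - X^q"
  by (simp add: P_def frob_add frob_diff power_mult_distrib sg_sg sg_pow[of X 2])

lemma cube_diff: "(X - Y)^3 = X^3 - (Y::'a)^3" using frob3[of X "-Y"] by simp

definition hh :: "'a \<Rightarrow> 'a" where "hh X = X^q * X - X^2"

lemma h_cases:
  assumes "hh X = hh Y"
  shows "(X \<in> Fq q \<and> Y \<in> Fq q) \<or> X = Y \<or> Y = - X"
proof -
  have hs: "hh W + (hh W)^q = -((W - W^q)^2)" for W
  proof -
    have "(hh W)^q = W * W^q - (W^q)^2"
      by (simp add: hh_def frob_diff power_mult_distrib sg_sg sg_pow[of W 2])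
    thus ?thesis by (simp add: hh_def algebra_simps power2_eq_square)
  qed
  have "(X - X^q)^2 = (Y - Y^q)^2" using hs[of X] hs[of Y] assms by simp
  hence c: "X - X^q = Y - Y^q \<or> X - X^q = - (Y - Y^q)" by (simp add: sq_eq_iff)
  have hX: "hh X = - (X * (X - X^q))" and hY: "hh Y = - (Y * (Y - Y^q))"
    by (simp_all add: hh_def algebra_simps power2_eq_square)
  show ?thesis
  proof (cases "X - X^q = Y - Y^q")
    case True
    have e1: "X * (X - X^q) = Y * (Y - Y^q)" using assms hX hY by simp
    hence "X * (X - X^q) = Y * (X - X^q)" using True by simp
    hence "(X - Y) * (X - X^q) = 0" by (simp add: left_diff_distrib)
    thus ?thesis using True by (auto simp: Fq_iff)
  next
    case False
    hence e: "Y - Y^q = - (X - X^q)" using c by auto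
    have e1: "X * (X - X^q) = Y * (Y - Y^q)" using assms hX hY by simp
    hence "X * (X - X^q) = - (Y * (X - X^q))" using e by (simp add: right_diff_distrib)
    hence "(X + Y) * (X - X^q) = 0" by (simp add: distrib_right eq_neg_iff_add_eq_0)
    thus ?thesis using e by (auto simp: Fq_iff eq_neg_iff_add_eq_0 add.commute)
  qed
qed

lemma h_conv: "(X \<in> Fq q \<and> Y \<in> Fq q) \<or> X = Y \<or> Y = - X \<Longrightarrow> hh X = hh Y"
  by (auto simp: hh_def Fq_iff power2_eq_square frob_neg)

lemma f_plus: "((X::'a) + 1)^(q+2) = (X^q + 1) * (X + 1)^2"
proof -
  have "(X + 1)^(q+2) = (X + 1)^q * (X + 1)^2" by (rule power_add)
  thus ?thesis by (simp only: frob_add power_one)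
qed
lemma f_minus: "((X::'a) - 1)^(q+2) = (X^q - 1) * (X - 1)^2"
proof -
  have "(X - 1)^(q+2) = (X - 1)^q * (X - 1)^2" by (rule power_add)
  thus ?thesis by (simp only: frob_diff power_one)
qed

lemma Dp: "(X + 1)^(q+2) - (X - 1)^(q+2) = hh X - 1"
  unfolding f_plus f_minus hh_def
  by (rule c3[OF three, where c="X^q * X + X^2 + 1"]) algebra

lemma Sp: "(X + 1)^(q+2) + (X - 1)^(q+2) = - P X"
  unfolding f_plus f_minus P_def
  by (rule c3[OF three, where c="X^q * X^2 + X^q + X"]) algebra


end
context F3 begin

lemma lin2:
  fixes a1 a2 c1 c2 b :: 'a
  shows "(a1 - a2 = b \<and> c1 - c2 = b) \<longleftrightarrow> (a1 - c1 = a2 - c2 \<and> (a1 + c1) - (a2 + c2) = 2*b)"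
proof
  assume "a1 - a2 = b \<and> c1 - c2 = b"
  thus "a1 - c1 = a2 - c2 \<and> (a1 + c1) - (a2 + c2) = 2*b" by (auto simp: algebra_simps mult_2)
next
  assume h: "a1 - c1 = a2 - c2 \<and> (a1 + c1) - (a2 + c2) = 2*b"
  have "2 * (a1 - a2) = (a1 - c1) - (a2 - c2) + ((a1 + c1) - (a2 + c2))" by (simp add: algebra_simps mult_2)
  also have "\<dots> = 2 * b" using h by simp
  finally have "2 * (a1 - a2) = 2 * b" .
  hence "a1 - a2 = b" by (simp only: mult_left_cancel[OF two_ne])
  moreover have "c1 - c2 = (a1 - a2) - ((a1 - c1) - (a2 - c2))" by (simp add: algebra_simps)
  ultimately show "a1 - a2 = b \<and> c1 - c2 = b" using h by simp
qed

lemma dbl: "x + x = - (x::'a)"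
proof -
  have "x + x = 2 * x" by (rule mult_2[symmetric])
  also have "\<dots> = - x" using two by simp
  finally show ?thesis .
qed

lemma m1p: "W + 1 + 1 = (W::'a) - 1"
proof -
  have "W + 1 + 1 = W + 2" by (simp add: add.assoc one_add_one)
  thus ?thesis using two by simp
qed

lemma key:
  assumes b: "b \<noteq> 0"
  shows "((X+1)^(q+2) - (Y+1)^(q+2) = b \<and> (X+1+1)^(q+2) - (Y+1+1)^(q+2) = b) \<longleftrightarrow>
    ((X \<in> Fq q \<and> Y \<in> Fq q \<and> (X - Y)^3 = b) \<or> (X \<notin> Fq q \<and> Y = - X \<and> P X = - b))"
proof -
  let ?a1 = "(X+1)^(q+2)" and ?a2 = "(Y+1)^(q+2)" and ?c1 = "(X-1)^(q+2)" and ?c2 = "(Y-1)^(q+2)"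
  have "(?a1 - ?a2 = b \<and> ?c1 - ?c2 = b) \<longleftrightarrow> (hh X = hh Y \<and> P X - P Y = b)"
  proof -
    have i1: "(?a1 - ?c1 = ?a2 - ?c2) \<longleftrightarrow> hh X = hh Y" using Dp[of X] Dp[of Y] by simp
    have tb: "2 * b = - b" using two by simp
    have i2: "(- P X - - P Y = - b) \<longleftrightarrow> P X - P Y = b"
    proof -
      have "- P X - - P Y = - (P X - P Y)" by simp
      thus ?thesis by (metis neg_equal_iff_equal)
    qed
    have "((?a1 + ?c1) - (?a2 + ?c2) = 2 * b) \<longleftrightarrow> P X - P Y = b"
      unfolding Sp tb using i2 .
    thus ?thesis using i1 lin2[of ?a1 ?a2 b ?c1 ?c2] by simp
  qed
  also have "\<dots> \<longleftrightarrow> ((X \<in> Fq q \<and> Y \<in> Fq q \<and> (X - Y)^3 = b) \<or> (X \<notin> Fq q \<and> Y = - X \<and> P X = - b))"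
  proof
    assume h1: "hh X = hh Y \<and> P X - P Y = b"
    from h_cases[of X Y] h1 consider "X \<in> Fq q \<and> Y \<in> Fq q" | "X = Y" | "Y = - X" by auto
    thus "(X \<in> Fq q \<and> Y \<in> Fq q \<and> (X - Y)^3 = b) \<or> (X \<notin> Fq q \<and> Y = - X \<and> P X = - b)"
    proof cases
      case 1 thus ?thesis using h1 by (simp add: P_Fq cube_diff)
    next
      case 2 thus ?thesis using h1 b by simp
    next
      case 3
      show ?thesis
      proof (cases "X \<in> Fq q")
        case True
        have "Y \<in> Fq q" using 3 True Fq_minus by simp
        thus ?thesis using h1 True by (simp add: P_Fq cube_diff)
      next
        case False
        have "P X - P Y = P X + P X" using 3 by (simp add: P_neg)
        also have "\<dots> = - P X" by (rule dbl)
        finally have "P X = - b" using h1 by simp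
        thus ?thesis using False 3 by simp
      qed
    qed
  next
    assume "(X \<in> Fq q \<and> Y \<in> Fq q \<and> (X - Y)^3 = b) \<or> (X \<notin> Fq q \<and> Y = - X \<and> P X = - b)"
    thus "hh X = hh Y \<and> P X - P Y = b"
    proof
      assume h3: "X \<in> Fq q \<and> Y \<in> Fq q \<and> (X - Y)^3 = b"
      have "hh X = hh Y" using h3 by (intro h_conv) simp
      thus ?thesis using h3 by (simp add: P_Fq cube_diff)
    next
      assume h2: "X \<notin> Fq q \<and> Y = - X \<and> P X = - b"
      have "P X - P Y = P X + P X" using h2 by (simp add: P_neg)
      also have "\<dots> = - P X" by (rule dbl)
      moreover have "hh X = hh Y" using h2 by (intro h_conv) simp
      ultimately show ?thesis using h2 by simp
    qed
  qed
  finally show ?thesis unfolding m1p .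
qed

end
context F3 begin

lemma cube_inj: "x^3 = y^3 \<Longrightarrow> x = (y::'a)"
proof -
  assume "x^3 = y^3"
  hence "(x - y)^3 = 0" by (simp add: cube_diff)
  thus ?thesis by simp
qed

lemma cube_onto: "b \<in> Fq q \<Longrightarrow> \<exists>e \<in> Fq q. e^3 = (b::'a)"
proof -
  assume b: "b \<in> Fq q"
  have "(\<lambda>x. x^3) ` Fq q = (Fq q :: 'a set)"
    by (rule endo_inj_surj) (auto simp: Fq_pow intro: inj_onI cube_inj)
  thus ?thesis using b by (metis imageE)
qed

lemma beta_formula:
  assumes b: "b \<noteq> 0"
  shows "beta_f (\<lambda>x::'a. x^(q+2)) 1 b = (if b \<in> Fq q then q else 0) + card {X. X \<notin> Fq q \<and> P X = - b}"
proof -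
  define M where "M = {(x::'a, y). x^(q+2) - y^(q+2) = b \<and> (x+1)^(q+2) - (y+1)^(q+2) = b}"
  define T1 where "T1 = {(X::'a, Y). X \<in> Fq q \<and> Y \<in> Fq q \<and> (X - Y)^3 = b}"
  define S where "S = {X::'a. X \<notin> Fq q \<and> P X = - b}"
  define T2 where "T2 = (\<lambda>X. (X, - X)) ` S"
  have bM: "beta_f (\<lambda>x::'a. x^(q+2)) 1 b = card M" by (simp add: beta_f_def M_def)
  have M: "M = (\<lambda>(X,Y). (X+1, Y+1)) ` (T1 \<union> T2)"
  proof (rule set_eqI)
    fix p :: "'a \<times> 'a"
    obtain x y where p: "p = (x, y)" by (cases p)
    define X where "X = x - 1"
    define Y where "Y = y - 1"
    have xX: "x = X + 1" "y = Y + 1" by (simp_all add: X_def Y_def)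
    have "p \<in> M \<longleftrightarrow> (X, Y) \<in> T1 \<union> T2"
      unfolding p M_def T1_def T2_def S_def xX using key[OF b, of X Y] by auto
    moreover have "p \<in> (\<lambda>(X,Y). (X+1, Y+1)) ` (T1 \<union> T2) \<longleftrightarrow> (X, Y) \<in> T1 \<union> T2"
    proof
      assume "p \<in> (\<lambda>(X,Y). (X+1, Y+1)) ` (T1 \<union> T2)"
      then obtain X' Y' where "(X', Y') \<in> T1 \<union> T2" "p = (X'+1, Y'+1)" by auto
      thus "(X, Y) \<in> T1 \<union> T2" using p xX by auto
    next
      assume "(X, Y) \<in> T1 \<union> T2"
      thus "p \<in> (\<lambda>(X,Y). (X+1, Y+1)) ` (T1 \<union> T2)" using p xX by force
    qed
    ultimately show "p \<in> M \<longleftrightarrow> p \<in> (\<lambda>(X,Y). (X+1, Y+1)) ` (T1 \<union> T2)" by simp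
  qed
  have inj: "inj_on (\<lambda>(X::'a,Y::'a). (X+1, Y+1)) (T1 \<union> T2)" by (auto intro: inj_onI)
  have disj: "T1 \<inter> T2 = {}" by (auto simp: T1_def T2_def S_def)
  have cM: "card M = card T1 + card T2"
    unfolding M card_image[OF inj] using disj by (simp add: card_Un_disjoint)
  have cT2: "card T2 = card S" unfolding T2_def by (rule card_image) (auto intro: inj_onI)
  have cT1: "card T1 = (if b \<in> Fq q then q else 0)"
  proof (cases "b \<in> Fq q")
    case True
    then obtain e where e: "e \<in> Fq q" "e^3 = b" using cube_onto by blast
    have "T1 = (\<lambda>X. (X, X - e)) ` Fq q"
    proof (rule set_eqI)
      fix p :: "'a \<times> 'a"
      obtain X Y where p: "p = (X, Y)" by (cases p)
      have "p \<in> T1 \<longleftrightarrow> X \<in> Fq q \<and> Y \<in> Fq q \<and> X - Y = e"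
        unfolding p T1_def using e cube_inj[of "X - Y" e] by auto
      also have "\<dots> \<longleftrightarrow> X \<in> Fq q \<and> Y = X - e"
        using e Fq_diff by auto
      also have "\<dots> \<longleftrightarrow> p \<in> (\<lambda>X. (X, X - e)) ` Fq q" unfolding p by auto
      finally show "p \<in> T1 \<longleftrightarrow> p \<in> (\<lambda>X. (X, X - e)) ` Fq q" .
    qed
    hence "card T1 = card (Fq q :: 'a set)" by (simp add: card_image inj_on_def)
    thus ?thesis using True card_Fq by simp
  next
    case False
    have "T1 = {}" using False by (auto simp: T1_def Fq_pow Fq_diff)
    thus ?thesis using False by simp
  qed
  show ?thesis using bM cM cT1 cT2 by (simp add: S_def)
qed

end
context F3 begin

lemma id1: "P X - (P X)^q = (X - X^q) * (X * X^q + 1)"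
proof -
  have "P X - (P X)^q = (X^2 * X^q + X^q - X) - ((X^q)^2 * X + X - X^q)"
    by (simp only: P_sg) (simp add: P_def)
  also have "\<dots> = (X - X^q) * (X * X^q + 1)"
    by (rule c3[OF three, where c="X^q - X"]) algebra
  finally show ?thesis .
qed

lemma id2: "(X - c)^2 = c^2 + 1 \<longleftrightarrow> X^2 + c * X - 1 = (0::'a)"
proof -
  have "(X - c)^2 - (c^2 + 1) = X^2 + c * X - 1"
    by (rule c3[OF three, where c="- c * X"]) algebra
  thus ?thesis by (metis eq_iff_diff_eq_0)
qed

lemma alg1: "X * Y + 1 = 0 \<Longrightarrow> X^2 * Y + Y - X = Y + X + 3 * (- X::'b::field)" by algebra
lemma alg2: "Y + X = - c \<Longrightarrow> X * Y + 1 = 0 \<Longrightarrow> X^2 + c * X - 1 = (0::'b::field)" by algebra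
lemma alg3: "X^2 + c * X - 1 = 0 \<Longrightarrow> Y^2 + c * Y - 1 = 0 \<Longrightarrow> (X - Y) * (X + Y + c) = (0::'b::field)" by algebra
lemma alg4: "X + Y + c = 0 \<Longrightarrow> X^2 + c * X - 1 = 0 \<Longrightarrow> X^2 * Y + Y - X = - c + 3 * (- X::'b::field)" by algebra

lemma S1:
  assumes c: "c \<in> Fq q"
  shows "{X. X \<notin> Fq q \<and> P X = - c} = {X. X \<notin> Fq q \<and> (X - c)^2 = c^2 + 1}"
proof (rule set_eqI, rule iffI)
  fix X assume "X \<in> {X. X \<notin> Fq q \<and> P X = - c}"
  hence X: "X \<notin> Fq q" "P X = - c" by auto
  have "(P X)^q = P X" using X(2) c by (simp add: Fq_iff frob_neg)
  hence "(X - X^q) * (X * X^q + 1) = 0" using id1[of X] by simp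
  moreover have "X - X^q \<noteq> 0" using X(1) by (simp add: Fq_iff)
  ultimately have n: "X * X^q + 1 = 0" by simp
  have "P X = X^q + X + 3 * (- X)" using alg1[OF n] unfolding P_def .
  hence "X^q + X = - c" using X(2) three by simp
  hence "X^2 + c * X - 1 = 0" using n by (intro alg2[of "X^q"]) (simp_all add: add.commute)
  thus "X \<in> {X. X \<notin> Fq q \<and> (X - c)^2 = c^2 + 1}" using X(1) id2 by simp
next
  fix X assume "X \<in> {X. X \<notin> Fq q \<and> (X - c)^2 = c^2 + 1}"
  hence X: "X \<notin> Fq q" and e: "X^2 + c * X - 1 = 0" using id2 by auto
  have "(X^2 + c * X - 1)^q = 0" using e q_pos by simp
  moreover have "(X^2 + c * X - 1)^q = (X^q)^2 + c * X^q - 1"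
    using c by (simp add: frob_add frob_diff power_mult_distrib sg_pow[of X 2] Fq_iff)
  ultimately have e': "(X^q)^2 + c * X^q - 1 = 0" by simp
  have "(X - X^q) * (X + X^q + c) = 0" using e e' by (rule alg3)
  moreover have "X - X^q \<noteq> 0" using X by (simp add: Fq_iff)
  ultimately have "X + X^q + c = 0" by simp
  hence "P X = - c + 3 * (- X)" using e unfolding P_def by (rule alg4)
  hence "P X = - c" using three by simp
  thus "X \<in> {X. X \<notin> Fq q \<and> P X = - c}" using X by simp
qed

end
context F3 begin

lemma div4: "x / 4 = (x::'a)" using four by simp

lemma part1:
  assumes c: "c \<in> Fq q" "c \<noteq> 0"
  shows "beta_f (\<lambda>x::'a. x^(q+2)) 1 (c/4) = (if c^2 + 1 \<in> C1 q then q + 2 else q)"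
proof -
  define e where "e = c^2 + 1"
  have eF: "e \<in> Fq q" using c by (simp add: e_def Fq_add Fq_pow)
  have b: "beta_f (\<lambda>x::'a. x^(q+2)) 1 (c/4) = q + card {X. X \<notin> Fq q \<and> (X - c)^2 = e}"
    using beta_formula[OF c(2)] c S1[OF c(1)] by (simp add: div4 e_def)
  show ?thesis
  proof (cases "e \<in> C1 q")
    case True
    then obtain \<rho> where r: "\<rho>^2 = e" using sq_exists eF by blast
    have e0: "e \<noteq> 0" using True by (simp add: C1_def)
    have rF: "\<rho> \<notin> Fq q"
    proof
      assume "\<rho> \<in> Fq q"
      hence "e \<in> C0 q" using r eF e0 by (auto simp: C0_def)
      thus False using True by (simp add: C1_def)
    qed
    have r0: "\<rho> \<noteq> 0" using r e0 by auto
    have "{X. X \<notin> Fq q \<and> (X - c)^2 = e} = {c + \<rho>, c - \<rho>}"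
    proof (rule set_eqI, rule iffI)
      fix X assume "X \<in> {X. X \<notin> Fq q \<and> (X - c)^2 = e}"
      hence "(X - c)^2 = \<rho>^2" using r by simp
      hence "X - c = \<rho> \<or> X - c = - \<rho>" by (simp add: sq_eq_iff)
      thus "X \<in> {c + \<rho>, c - \<rho>}" by (auto simp: algebra_simps)
    next
      fix X assume X: "X \<in> {c + \<rho>, c - \<rho>}"
      have "X \<notin> Fq q"
      proof
        assume "X \<in> Fq q"
        hence "X - c \<in> Fq q" using c Fq_diff by blast
        hence "\<rho> \<in> Fq q" using X Fq_minus[of "- \<rho>"] by auto
        thus False using rF by simp
      qed
      moreover have "(X - c)^2 = e" using X r by auto
      ultimately show "X \<in> {X. X \<notin> Fq q \<and> (X - c)^2 = e}" by simp
    qed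
    moreover have "c + \<rho> \<noteq> c - \<rho>" using neg_ne[OF r0] by (metis add_left_cancel diff_conv_add_uminus)
    ultimately show ?thesis using b True by (simp add: e_def)
  next
    case False
    have "{X. X \<notin> Fq q \<and> (X - c)^2 = e} = {}"
    proof (rule ccontr)
      assume "{X. X \<notin> Fq q \<and> (X - c)^2 = e} \<noteq> {}"
      then obtain X where X: "X \<notin> Fq q" "(X - c)^2 = e" by auto
      show False
      proof (cases "e = 0")
        case True
        hence "X = c" using X by simp
        thus False using X c by simp
      next
        case e0: False
        hence "e \<in> C0 q" using False eF by (simp add: C1_def)
        then obtain y where y: "y \<in> Fq q" "y^2 = e" by (auto simp: C0_def)
        hence "(X - c)^2 = y^2" using X by simp
        hence "X - c = y \<or> X - c = - y" by (simp only: sq_eq_iff)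
        hence "X = c + y \<or> X = c - y" by (auto simp: algebra_simps)
        thus False using X y c by (auto simp: Fq_add Fq_diff)
      qed
    qed
    thus ?thesis using b False by (simp add: e_def)
  qed
qed

end
context F3 begin

lemma alg5: "T^3 = T \<Longrightarrow> T = 0 \<or> T = 1 \<or> T = (-1::'b::field)"
proof -
  assume "T^3 = T"
  moreover have "T * ((T - 1) * (T + 1)) = T^3 - T" by (simp add: algebra_simps power3_eq_cube)
  ultimately have "T * ((T - 1) * (T + 1)) = 0" by simp
  thus ?thesis by (auto simp: eq_neg_iff_add_eq_0)
qed

lemma id3: "P X + (P X)^q = X * X^q * (X + X^q)"
  by (simp only: P_sg) (simp add: P_def algebra_simps power2_eq_square)

lemma sg_zero: "(X::'a)^q = 0 \<longleftrightarrow> X = 0"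
  using q_pos by simp

lemma part2:
  assumes d: "d \<in> Fq q" "d \<noteq> 0"
  shows "beta_f (\<lambda>x::'a. x^(q+2)) 1 (d * Z / 4) = 1"
proof -
  define b where "b = d * Z"
  have bq: "b^q = - b" using d by (simp add: b_def power_mult_distrib Zq Fq_iff)
  have b0: "b \<noteq> 0" using d Z_ne by (simp add: b_def)
  have bF: "b \<notin> Fq q" using bq b0 neg_ne[OF b0] by (auto simp: Fq_iff)
  define A where "A = {X::'a. X^q = - X}"
  define L where "L = (\<lambda>X::'a. X^3 - X)"
  have S: "{X. X \<notin> Fq q \<and> P X = - b} = {X \<in> A. L X = b}"
  proof (rule set_eqI, rule iffI)
    fix X assume "X \<in> {X. X \<notin> Fq q \<and> P X = - b}"
    hence X: "X \<notin> Fq q" "P X = - b" by auto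
    have "(P X)^q = b" using X(2) bq by (simp add: frob_neg)
    hence "X * X^q * (X + X^q) = 0" using id3[of X] X(2) by simp
    moreover have "X \<noteq> 0" using X(1) by auto
    ultimately have "X + X^q = 0" using sg_zero by simp
    hence xq: "X^q = - X" by (simp add: eq_neg_iff_add_eq_0 add.commute)
    have "P X = -(X^3) + (- X - X)" using xq by (simp add: P_def power2_eq_square power3_eq_cube)
    also have "\<dots> = -(X^3) + X" using dbl[of "- X"] by simp
    finally have "X^3 - X = b" using X(2) by (simp add: algebra_simps)
    thus "X \<in> {X \<in> A. L X = b}" using xq by (simp add: A_def L_def)
  next
    fix X assume "X \<in> {X \<in> A. L X = b}"
    hence xq: "X^q = - X" and l: "X^3 - X = b" by (auto simp: A_def L_def)
    have "X \<noteq> 0" using l b0 by auto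
    hence "X \<notin> Fq q" using xq neg_ne by (auto simp: Fq_iff)
    moreover have "P X = - b"
    proof -
      have "P X = -(X^3) + (- X - X)" using xq by (simp add: P_def power2_eq_square power3_eq_cube)
      also have "\<dots> = -(X^3) + X" using dbl[of "- X"] by simp
      also have "\<dots> = - (X^3 - X)" by simp
      also have "\<dots> = - b" using l by simp
      finally show ?thesis .
    qed
    ultimately show "X \<in> {X. X \<notin> Fq q \<and> P X = - b}" by simp
  qed
  have injL: "inj_on L A"
  proof (rule inj_onI)
    fix X Y assume XY: "X \<in> A" "Y \<in> A" "L X = L Y"
    define T where "T = X - Y"
    have Tq: "T^q = - T" using XY by (simp add: A_def T_def frob_diff)
    have "T^3 = T" using XY(3) by (simp add: L_def T_def cube_diff algebra_simps)
    hence "T = 0 \<or> T = 1 \<or> T = -1" by (rule alg5)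
    moreover have "T \<noteq> 1" using Tq one_ne_neg by auto
    moreover have "T \<noteq> -1" using Tq one_ne_neg frob_neg[of 1] by auto
    ultimately show "X = Y" by (simp add: T_def)
  qed
  have LA: "L ` A \<subseteq> A"
    by (auto simp: A_def L_def frob_diff sg_pow[of _ 3] power_minus_odd)
  have "L ` A = A" by (rule endo_inj_surj[OF _ LA injL]) simp
  moreover have "b \<in> A" using bq by (simp add: A_def)
  ultimately obtain X0 where X0: "X0 \<in> A" "L X0 = b" by (metis imageE)
  have "{X \<in> A. L X = b} = {X0}" using X0 injL by (auto simp: inj_on_def)
  hence "card {X. X \<notin> Fq q \<and> P X = - b} = 1" using S by simp
  thus ?thesis using beta_formula[OF b0] bF by (simp add: div4 b_def)
qed

end
context F3 begin

lemma five_roots: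
  assumes cc: "cc \<in> Fq q" "cc \<noteq> 0" and B: "B \<in> Fq q" "B \<noteq> 0"
    and r: "r1 \<in> Fq q" "r2 \<in> Fq q" "r3 \<in> Fq q"
    and q0: "Qe (cc^2) B r1 = 0" "Qe (cc^2) B r2 = 0" "Qe (cc^2) B r3 = 0"
    and dist: "r1 \<noteq> r2" "r1 \<noteq> r3" "r2 \<noteq> r3"
  shows "card {n \<in> Fq q. Qe (cc^2) B n = (0::'a)} = 5"
proof -
  define A where "A = cc^2"
  define s1 where "s1 = r1 + r2 + r3"
  define s2 where "s2 = r1*r2 + r1*r3 + r2*r3"
  define s3 where "s3 = r1*r2*r3"
  define u where "u = s1 - 1"
  define v where "v = 1 + s1 * u - s2"
  have uF: "u \<in> Fq q" using r by (simp add: u_def s1_def Fq_add Fq_diff)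
  have vF: "v \<in> Fq q" using r uF by (simp add: v_def s1_def s2_def Fq_add Fq_diff Fq_mult)
  define e2 where "e2 = B - A + s1*v - s2*u + s3"
  define e1 where "e1 = A - s2*v + s3*u"
  define e0 where "e0 = s3*v - A"
  have fac: "Qe A B n - (n-r1)*(n-r2)*(n-r3)*(n^2 + u*n + v) = e2 * n^2 + e1 * n + e0" for n
    unfolding e2_def e1_def e0_def s1_def s2_def s3_def
    by (rule factor3) (simp_all add: u_def v_def s1_def s2_def)
  have "e2 * r1^2 + e1 * r1 + e0 = 0" using fac[of r1] q0 by (simp add: A_def)
  moreover have "e2 * r2^2 + e1 * r2 + e0 = 0" using fac[of r2] q0 by (simp add: A_def)
  moreover have "e2 * r3^2 + e1 * r3 + e0 = 0" using fac[of r3] q0 by (simp add: A_def)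
  ultimately have ez: "e2 = 0" "e1 = 0" "e0 = 0" using vand[OF dist] by blast+
  define \<delta> where "\<delta> = u^2 - v"
  have dF: "\<delta> \<in> Fq q" using uF vF by (simp add: \<delta>_def Fq_diff Fq_pow)
  obtain \<rho> where rho: "\<rho>^2 = \<delta>" using sq_exists[OF dF] by blast
  define r4 where "r4 = u - \<rho>"
  define r5 where "r5 = u + \<rho>"
  have p45: "r4 + r5 = - u" using dbl[of u] by (simp add: r4_def r5_def)
  have t45: "r4 * r5 = v" using rho by (simp add: r4_def r5_def \<delta>_def algebra_simps power2_eq_square)
  have j45: "r4 - r5 = \<rho>" using dbl[of "- \<rho>"] by (simp add: r4_def r5_def)
  have Ev: "E1 r1 r2 r3 r4 r5 = 1" "E2 r1 r2 r3 r4 r5 = 1" "E3 r1 r2 r3 r4 r5 = A - B"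
     "E4 r1 r2 r3 r4 r5 = A" "E5 r1 r2 r3 r4 r5 = A"
  proof -
    show "E1 r1 r2 r3 r4 r5 = 1" unfolding Esplit p45 by (simp add: u_def s1_def)
    show "E2 r1 r2 r3 r4 r5 = 1" unfolding Esplit p45 t45 by (simp add: v_def s1_def s2_def)
    show "E3 r1 r2 r3 r4 r5 = A - B" unfolding Esplit p45 t45 using ez(1)
      by (simp add: e2_def s1_def s2_def s3_def algebra_simps)
    show "E4 r1 r2 r3 r4 r5 = A" unfolding Esplit p45 t45 using ez(2)
      by (simp add: e1_def s2_def s3_def algebra_simps)
    show "E5 r1 r2 r3 r4 r5 = A" unfolding Esplit t45 using ez(3)
      by (simp add: e0_def s3_def algebra_simps)
  qed
  have D1: "(r1-r2)*(r1-r3)*(r1-r4)*(r1-r5)*(r1+1) = - B * r1"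
    by (rule deriv_val[OF three]) (use Ev in simp_all)
  have D2: "(r2-r1)*(r2-r3)*(r2-r4)*(r2-r5)*(r2+1) = - B * r2"
    by (rule deriv_val[OF three]) (use Ev in \<open>simp_all add: Eperm2\<close>)
  have D3: "(r3-r1)*(r3-r2)*(r3-r4)*(r3-r5)*(r3+1) = - B * r3"
    by (rule deriv_val[OF three]) (use Ev in \<open>simp_all add: Eperm3\<close>)
  have D4: "(r4-r1)*(r4-r2)*(r4-r3)*(r4-r5)*(r4+1) = - B * r4"
    by (rule deriv_val[OF three]) (use Ev in \<open>simp_all add: Eperm4\<close>)
  have D5: "(r5-r1)*(r5-r2)*(r5-r3)*(r5-r4)*(r5+1) = - B * r5"
    by (rule deriv_val[OF three]) (use Ev in \<open>simp_all add: Eperm5\<close>)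
  define \<Delta> where "\<Delta> = (r1-r2)*(r1-r3)*(r1-r4)*(r1-r5)*(r2-r3)*(r2-r4)*(r2-r5)*(r3-r4)*(r3-r5)*(r4-r5)"
  have "((r1-r2)*(r1-r3)*(r1-r4)*(r1-r5)*(r1+1)) * ((r2-r1)*(r2-r3)*(r2-r4)*(r2-r5)*(r2+1))
      * ((r3-r1)*(r3-r2)*(r3-r4)*(r3-r5)*(r3+1)) * ((r4-r1)*(r4-r2)*(r4-r3)*(r4-r5)*(r4+1))
      * ((r5-r1)*(r5-r2)*(r5-r3)*(r5-r4)*(r5+1)) = \<Delta>^2 * ((r1+1)*(r2+1)*(r3+1)*(r4+1)*(r5+1))"
    using delta_prod[of "r1-r2" "r1-r3" "r1-r4" "r1-r5" "r1+1" "r2-r3" "r2-r4" "r2-r5" "r2+1"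
        "r3-r4" "r3-r5" "r3+1" "r4-r5" "r4+1" "r5+1"]
    by (simp add: \<Delta>_def)
  hence P1: "\<Delta>^2 * ((r1+1)*(r2+1)*(r3+1)*(r4+1)*(r5+1)) = (- B * r1) * (- B * r2) * (- B * r3) * (- B * r4) * (- B * r5)"
    using D1 D2 D3 D4 D5 by simp
  have "(-1-r1)*(-1-r2)*(-1-r3)*(-1-r4)*(-1-r5) = -1 - 1 - 1 - (A - B) - A - A"
    using prod5[of "-1" r1 r2 r3 r4 r5] Ev by simp
  also have "\<dots> = B + 3 * (-1 - A)" by (simp add: algebra_simps)
  finally have "(-1-r1)*(-1-r2)*(-1-r3)*(-1-r4)*(-1-r5) = B" using three by simp
  moreover have "(-1-r1)*(-1-r2)*(-1-r3)*(-1-r4)*(-1-r5) = - ((r1+1)*(r2+1)*(r3+1)*(r4+1)*(r5+1))"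
    by algebra
  ultimately have P2: "(r1+1)*(r2+1)*(r3+1)*(r4+1)*(r5+1) = - B" by (metis minus_minus)
  have "(- B * r1) * (- B * r2) * (- B * r3) * (- B * r4) * (- B * r5) = - (B^5 * E5 r1 r2 r3 r4 r5)"
    unfolding E5_def by algebra
  hence "\<Delta>^2 * (- B) = - (B^5 * A)" using P1 P2 Ev by simp
  hence "\<Delta>^2 * B = B^5 * A" by (simp add: algebra_simps)
  also have "\<dots> = B * (B^4 * A)" by (simp add: power_Suc[symmetric] del: power_Suc)
  finally have "\<Delta>^2 * B = B * (B^4 * A)" .
  hence D2eq: "\<Delta>^2 = (cc * B^2)^2" using B by (simp add: A_def power_mult_distrib power_mult[symmetric])
  have ccB: "cc * B^2 \<noteq> 0" using cc B by simp
  have Dne: "\<Delta> \<noteq> 0" using D2eq ccB by auto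
  define g where "g = (\<lambda>x. x^2 + u*x + v)"
  have gi: "(x - r4) * (x - r5) = g x" for x
  proof -
    have "(x - r4) * (x - r5) = x^2 - (r4 + r5) * x + r4 * r5" by (simp add: algebra_simps power2_eq_square)
    thus ?thesis using p45 t45 by (simp add: g_def)
  qed
  define W where "W = (r1-r2)*(r1-r3)*(r2-r3)*g r1*g r2*g r3"
  have DW: "\<Delta> = \<rho> * W"
    unfolding \<Delta>_def W_def using delta_split[of "r1-r2" "r1-r3" "r1-r4" "r1-r5" "r2-r3" "r2-r4" "r2-r5" "r3-r4" "r3-r5" "r4-r5"]
      gi[of r1] gi[of r2] gi[of r3] j45 by simp
  have WF: "W \<in> Fq q" using r uF vF by (simp add: W_def g_def Fq_mult Fq_diff Fq_add Fq_pow)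
  have "(\<rho> * W)^2 = (cc * B^2)^2" using D2eq DW by simp
  hence "\<rho> * W = cc * B^2 \<or> \<rho> * W = - (cc * B^2)" by (simp only: sq_eq_iff)
  moreover have W0: "W \<noteq> 0" using Dne DW by auto
  ultimately have "\<rho> = cc * B^2 / W \<or> \<rho> = - (cc * B^2 / W)" by (auto simp: field_simps)
  moreover have "cc * B^2 / W \<in> Fq q" using cc B WF by (simp add: Fq_divide Fq_mult Fq_pow)
  ultimately have rhoF: "\<rho> \<in> Fq q" using Fq_minus by auto
  have r45: "r4 \<in> Fq q" "r5 \<in> Fq q" using uF rhoF by (simp_all add: r4_def r5_def Fq_add Fq_diff)
  have Qprod: "Qe (cc^2) B n = (n-r1)*(n-r2)*(n-r3)*(n-r4)*(n-r5)" for n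
    using prod5[of n r1 r2 r3 r4 r5] Ev by (simp add: Qe_def A_def algebra_simps)
  have "{n \<in> Fq q. Qe (cc^2) B n = 0} = {r1, r2, r3, r4, r5}"
    using r r45 by (auto simp: Qprod)
  moreover have "distinct [r1, r2, r3, r4, r5]" using Dne by (auto simp: \<Delta>_def)
  hence "card (set [r1, r2, r3, r4, r5]) = 5" by (subst distinct_card) simp_all
  ultimately show ?thesis by simp
qed

end
context F3 begin

lemma S_to_R:
  assumes wF: "w \<notin> Fq q" and X: "X \<notin> Fq q" "P X = w"
  shows "X * X^q \<in> Fq q" "X * X^q \<noteq> 0" "X * X^q + 1 \<noteq> 0"
    "(X * X^q) * (X * X^q + 1) * X = (X * X^q - 1) * w - w^q"
    "Qe ((w + w^q)^2) ((w - w^q)^2) (X * X^q) = 0"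
proof -
  define n where "n = X * X^q"
  show "X * X^q \<in> Fq q" by (rule Fq_norm)
  have X0: "X \<noteq> 0" using X by auto
  hence Xq0: "X^q \<noteq> 0" using sg_zero by simp
  show n0: "X * X^q \<noteq> 0" using X0 Xq0 by simp
  have e1: "(n-1)*X + X^q = w" using X(2) by (simp add: P_def n_def algebra_simps power2_eq_square)
  have e2: "X + (n-1)*X^q = w^q" using X(2) P_sg[of X] by (simp add: n_def algebra_simps power2_eq_square)
  have e2': "(n-1)*X^q + X = w^q" using e2 by (simp add: add.commute)
  have e1': "X^q + (n-1)*X = w" using e1 by (simp add: add.commute)
  show n1: "X * X^q + 1 \<noteq> 0"
  proof
    assume "X * X^q + 1 = 0"
    hence "n = -1" by (simp add: n_def eq_neg_iff_add_eq_0)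
    hence "(-1 + -1) * X + X^q = w" using e1 by simp
    moreover have m2: "(-1 + -1 :: 'a) = 1" using dbl[of "-1"] by simp
    ultimately have "X + X^q = w" by (simp only: m2 mult_1_left)
    thus False using wF Fq_trace by auto
  qed
  have M1: "n*(n+1)*X = (n-1)*w - w^q" by (rule lin_solve[OF three e1 e2])
  thus "(X * X^q) * (X * X^q + 1) * X = (X * X^q - 1) * w - w^q" by (simp add: n_def)
  have M2: "n*(n+1)*X^q = (n-1)*w^q - w" by (rule lin_solve[OF three e2' e1'])
  have "(n*(n+1))^2 * n = (n*(n+1)*X) * (n*(n+1)*X^q)" by (simp add: n_def power2_eq_square algebra_simps)
  also have "\<dots> = (n+1)^2*(w+w^q)^2 - n^2*(w-w^q)^2" unfolding M1 M2 by (rule MM[OF three])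
  finally have "n^3*(n+1)^2 - (w+w^q)^2*(n+1)^2 + (w-w^q)^2*n^2 = 0"
    by (simp add: power2_eq_square power3_eq_cube algebra_simps)
  thus "Qe ((w + w^q)^2) ((w - w^q)^2) (X * X^q) = 0" using QQ[OF three] by (simp add: n_def)
qed

lemma R_to_S:
  assumes wF: "w \<notin> Fq q" and cc: "w + w^q \<noteq> 0"
    and n: "n \<in> Fq q" "Qe ((w + w^q)^2) ((w - w^q)^2) n = 0"
  defines "X \<equiv> ((n-1)*w - w^q) / (n*(n+1))"
  shows "X \<notin> Fq q" "P X = w" "X * X^q = n"
proof -
  define A where "A = (w + w^q)^2"
  define B where "B = (w - w^q)^2"
  have A0: "A \<noteq> 0" using cc by (simp add: A_def)
  have B0: "B \<noteq> 0" using wF by (simp add: B_def Fq_iff)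
  have Q: "Qe A B n = 0" using n by (simp add: A_def B_def)
  have n0: "n \<noteq> 0"
  proof
    assume "n = 0" hence "Qe A B n = - A" by (simp add: Qe_def)
    thus False using Q A0 by simp
  qed
  have n1: "n + 1 \<noteq> 0"
  proof
    assume "n + 1 = 0" hence "n = -1" by (simp add: eq_neg_iff_add_eq_0)
    moreover have "Qe A B (-1) = B + 3 * (-1 - A)" unfolding Qe_def by algebra
    ultimately have "Qe A B n = B" using three by simp
    thus False using Q B0 by simp
  qed
  define M where "M = (n-1)*w - w^q"
  define Mq where "Mq = (n-1)*w^q - w"
  have nq: "n^q = n" using n by (simp add: Fq_iff)
  have Mqq: "M^q = Mq" by (simp add: M_def Mq_def frob_diff power_mult_distrib nq sg_sg)
  have dq: "(n*(n+1))^q = n*(n+1)" by (simp add: power_mult_distrib frob_add nq)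
  have Xd: "X = M / (n*(n+1))" by (simp add: X_def M_def)
  have Xq: "X^q = Mq / (n*(n+1))" by (simp add: Xd power_divide Mqq dq)
  have "M * Mq = (n+1)^2*A - n^2*B" unfolding M_def Mq_def A_def B_def by (rule MM[OF three])
  also have "\<dots> = n^3*(n+1)^2"
  proof -
    have "n^3*(n+1)^2 - A*(n+1)^2 + B*n^2 = 0" using QQ[OF three, of n A B] Q by simp
    thus ?thesis by algebra
  qed
  finally have MMq: "M * Mq = n^3*(n+1)^2" .
  have "X * X^q = (M * Mq) / ((n*(n+1)) * (n*(n+1)))" unfolding Xq by (simp add: Xd)
  also have "\<dots> = (n^3*(n+1)^2) / ((n*(n+1)) * (n*(n+1)))" by (simp only: MMq)
  also have "\<dots> = (n * ((n*(n+1)) * (n*(n+1)))) / ((n*(n+1)) * (n*(n+1)))"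
    by (simp only: power2_eq_square power3_eq_cube mult_ac)
  also have "\<dots> = n" using n0 n1 by simp
  finally have N: "X * X^q = n" .
  thus "X * X^q = n" .
  have "X^2 * X^q = X * (X * X^q)" by (simp add: power2_eq_square mult.assoc)
  hence "P X = X * n + X^q - X" by (simp add: P_def N)
  also have "\<dots> = (n-1) * X + X^q" by (simp add: algebra_simps)
  also have "\<dots> = ((n-1)*M) / (n*(n+1)) + Mq / (n*(n+1))" unfolding Xq by (simp add: Xd)
  also have "\<dots> = ((n-1)*M + Mq) / (n*(n+1))" by (rule add_divide_distrib[symmetric])
  also have "(n-1)*M + Mq = n*(n+1)*w" unfolding M_def Mq_def by (rule back_id[OF three])
  finally show PX: "P X = w" using n0 n1 by simp
  show "X \<notin> Fq q"
  proof
    assume "X \<in> Fq q"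
    hence "P X \<in> Fq q" by (simp add: P_Fq Fq_pow)
    thus False using PX wF by simp
  qed
qed

lemma card_S_R:
  assumes wF: "w \<notin> Fq q" and cc: "w + w^q \<noteq> 0"
  shows "card {X. X \<notin> Fq q \<and> P X = w} = card {n \<in> Fq q. Qe ((w + w^q)^2) ((w - w^q)^2) n = 0}"
proof (rule bij_betw_same_card[of "\<lambda>X. X * X^q"], rule bij_betw_imageI)
  show "inj_on (\<lambda>X. X * X^q) {X. X \<notin> Fq q \<and> P X = w}"
  proof (rule inj_onI)
    fix X Y assume X: "X \<in> {X. X \<notin> Fq q \<and> P X = w}" and Y: "Y \<in> {X. X \<notin> Fq q \<and> P X = w}"
      and e: "X * X^q = Y * Y^q"
    have "(X * X^q) * (X * X^q + 1) * X = (X * X^q - 1) * w - w^q" using S_to_R(4)[OF wF] X by simp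
    moreover have "(Y * Y^q) * (Y * Y^q + 1) * Y = (Y * Y^q - 1) * w - w^q" using S_to_R(4)[OF wF] Y by simp
    ultimately have "(X * X^q) * (X * X^q + 1) * X = (X * X^q) * (X * X^q + 1) * Y" using e by simp
    moreover have "X * X^q \<noteq> 0" "X * X^q + 1 \<noteq> 0" using S_to_R(2,3)[OF wF] X by auto
    ultimately show "X = Y" by simp
  qed
  show "(\<lambda>X. X * X^q) ` {X. X \<notin> Fq q \<and> P X = w} = {n \<in> Fq q. Qe ((w + w^q)^2) ((w - w^q)^2) n = 0}"
  proof (rule set_eqI, rule iffI)
    fix n assume "n \<in> (\<lambda>X. X * X^q) ` {X. X \<notin> Fq q \<and> P X = w}"
    then obtain X where "X \<notin> Fq q" "P X = w" "n = X * X^q" by auto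
    thus "n \<in> {n \<in> Fq q. Qe ((w + w^q)^2) ((w - w^q)^2) n = 0}" using S_to_R(1,5)[OF wF] by simp
  next
    fix n assume n: "n \<in> {n \<in> Fq q. Qe ((w + w^q)^2) ((w - w^q)^2) n = 0}"
    define X where "X = ((n-1)*w - w^q) / (n*(n+1))"
    have "X \<notin> Fq q" "P X = w" "X * X^q = n" using R_to_S[OF wF cc] n by (auto simp: X_def)
    thus "n \<in> (\<lambda>X. X * X^q) ` {X. X \<notin> Fq q \<and> P X = w}" by force
  qed
qed

end
context F3 begin

lemma roots_count:
  assumes cc: "cc \<in> Fq q" "cc \<noteq> 0" and B: "B \<in> Fq q" "B \<noteq> 0"
  shows "card {n \<in> Fq q. Qe (cc^2) B n = (0::'a)} \<in> {0, 1, 2, 5}"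
proof (cases "card {n \<in> Fq q. Qe (cc^2) B n = (0::'a)} \<ge> 3")
  case True
  then obtain T where T: "T \<subseteq> {n \<in> Fq q. Qe (cc^2) B n = (0::'a)}" "card T = 3"
    by (meson obtain_subset_with_card_n)
  then obtain x y z where xyz: "T = {x, y, z}" "x \<noteq> y" "y \<noteq> z" "x \<noteq> z" by (auto simp: card_3_iff)
  have xs: "x \<in> Fq q" "y \<in> Fq q" "z \<in> Fq q" "Qe (cc^2) B x = 0" "Qe (cc^2) B y = 0" "Qe (cc^2) B z = 0"
    using T(1) xyz(1) by auto
  have "card {n \<in> Fq q. Qe (cc^2) B n = (0::'a)} = 5"
    using five_roots[OF cc B xs(1-3) xs(4-6) xyz(2) xyz(4) xyz(3)] .
  thus ?thesis by simp
next
  case False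
  hence "card {n \<in> Fq q. Qe (cc^2) B n = (0::'a)} \<le> 2" by simp
  hence "card {n \<in> Fq q. Qe (cc^2) B n = (0::'a)} = 0 \<or> card {n \<in> Fq q. Qe (cc^2) B n = (0::'a)} = 1 \<or> card {n \<in> Fq q. Qe (cc^2) B n = (0::'a)} = 2"
    by linarith
  thus ?thesis by (simp del: card_0_eq) blast
qed

lemma part3:
  assumes c: "c \<in> Fq q" "c \<noteq> 0" and d: "d \<in> Fq q" "d \<noteq> 0"
  shows "beta_f (\<lambda>x::'a. x^(q+2)) 1 ((c + d * Z) / 4) \<in> {0, 1, 2, 5}"
proof -
  define b where "b = c + d * Z"
  have bq: "b^q = c - d * Z" using c d by (simp add: b_def frob_add power_mult_distrib Zq Fq_iff)
  have dZ: "d * Z \<noteq> 0" using d Z_ne by simp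
  have bF: "b \<notin> Fq q"
  proof
    assume "b \<in> Fq q"
    hence "c + d * Z = c - d * Z" using bq by (simp add: Fq_iff b_def)
    hence "d * Z = - (d * Z)" by simp
    thus False using neg_ne[OF dZ] by simp
  qed
  have b0: "b \<noteq> 0" using bF by auto
  define w where "w = - b"
  have wF: "w \<notin> Fq q" using bF Fq_minus[of w] by (auto simp: w_def)
  have wq: "w^q = - (c - d * Z)" by (simp add: w_def frob_neg bq)
  have "w + w^q = - (c + d * Z) + - (c - d * Z)" by (simp only: wq) (simp add: w_def b_def)
  also have "\<dots> = - (c + c)" by (simp add: algebra_simps)
  also have "\<dots> = c" using dbl[of c] by simp
  finally have cc: "w + w^q = c" .
  define B where "B = (w - w^q)^2"
  have BF: "B \<in> Fq q" by (simp add: B_def Fq_iff sg_pow[of _ 2] frob_diff sg_sg) (simp add: power2_eq_square algebra_simps)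
  have B0: "B \<noteq> 0" using wF by (simp add: B_def Fq_iff)
  have "beta_f (\<lambda>x::'a. x^(q+2)) 1 ((c + d * Z) / 4) = card {X. X \<notin> Fq q \<and> P X = w}"
    using beta_formula[OF b0] bF by (simp add: div4 b_def w_def)
  also have "\<dots> = card {n \<in> Fq q. Qe ((w + w^q)^2) ((w - w^q)^2) n = 0}"
    by (rule card_S_R[OF wF]) (simp add: cc c)
  also have "\<dots> \<in> {0, 1, 2, 5}" unfolding cc using roots_count[OF c BF B0] by (simp add: B_def)
  finally show ?thesis .
qed

end

theorem proposition8:
  fixes m :: nat and \<alpha> Z :: "'a::{field,finite}"
  assumes "m \<ge> 1"
    and "card (UNIV :: 'a set) = (3 ^ m) ^ 2"
    and "\<alpha> \<in> C1 (3 ^ m)"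
    and "Z \<notin> Fq (3 ^ m)" and "Z ^ 2 = \<alpha>"
  shows "(\<forall>c :: 'a \<in> Fq (3 ^ m) - {0}.
            beta_f (\<lambda>x. x ^ (3 ^ m + 2)) 1 (c / 4) =
              (if c ^ 2 + 1 \<in> C1 (3 ^ m) then 3 ^ m + 2 else 3 ^ m))
       \<and> (\<forall>d \<in> Fq (3 ^ m) - {0}. beta_f (\<lambda>x. x ^ (3 ^ m + 2)) 1 (d * Z / 4) = 1)
       \<and> nu (\<lambda>x::'a. x ^ (3 ^ m + 2)) 1 > 0
       \<and> (\<forall>c :: 'a \<in> Fq (3 ^ m) - {0}. \<forall>d \<in> Fq (3 ^ m) - {0}.
            beta_f (\<lambda>x. x ^ (3 ^ m + 2)) 1 ((c + d * Z) / 4) \<in> {0, 1, 2, 5})"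
proof -
  have ZZ: "Z^2 \<in> Fq (3^m)" using assms(3,5) by (simp add: C1_def)
  interpret F: F3 m "3^m" Z
    by unfold_locales (use assms ZZ in auto)
  have p2: "\<forall>d \<in> Fq (3 ^ m) - {0}. beta_f (\<lambda>x::'a. x ^ (3 ^ m + 2)) 1 (d * Z / 4) = 1"
    using F.part2 by blast
  have "1 * Z / 4 \<noteq> 0" using F.Z_ne F.four by simp
  moreover have "beta_f (\<lambda>x::'a. x ^ (3 ^ m + 2)) 1 (1 * Z / 4) = 1" using bspec[OF p2, of 1] by simp
  ultimately have "1 * Z / 4 \<in> {b. b \<noteq> 0 \<and> beta_f (\<lambda>x::'a. x ^ (3 ^ m + 2)) 1 b = 1}" by simp
  hence "nu (\<lambda>x::'a. x ^ (3 ^ m + 2)) 1 > 0" unfolding nu_def by (metis card_gt_0_iff empty_iff finite)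
  thus ?thesis using F.part1 p2 F.part3 by blast
qed


end
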